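(* Let $n,m$ be positive integers and $\mathbf{r}=(r_1,\dots,r_m)$, $\mathbf{s}=(s_1,\dots,s_m)$ sequences of nonnegative integers with sums $r$ and $s$. Then \[ |\mathrm{SB}(n,\mathbf{r},\mathbf{s})| = |\mathrm{SB}^-(n,\mathbf{r},\mathbf{s})| \frac{\left((r+s+1)n+m\binom n2+\sum_{i=1}^m r_is_i\right)!} {\left((r+s+1)n+m\binom n2\right)!}. \]
   Context: For nonnegative integers $p,q$, the $(n,p,q)$-staircase is the set of cells $(i,j)$ (row $i$, column $j$) with $1\le i\le p+n$, $1\le j\le n+q$, $i\le j+p$; the cell $(j+p,j)$ ($1\le j\le n$) is its $j$th diagonal cell (row $i>p$ contains the diagonal cell $(i,i-p)$, column $j\le n$ contains $(j+p,j)$, other rows/columns contain none). The $(n,p,q)^-$-staircase is obtained by removing the cells with $i\le p$ and $j>n$. Take pages $\lambda^{(i)}$ = the $(n,r_i,s_i)$-staircase (resp. $(n,r_i,s_i)^-$-staircase), $1\le i\le m$, identifying the $j$th diagonal cells of all pages for each $j$. An $(n,\mathbf{r},\mathbf{s})$-Selberg book (resp. $(n,\mathbf{r},\mathbf{s})^-$-Selberg book) is a filling of the resulting cells with $1,\dots,N$ where $N=(r+s+1)n+m\binom n2+\sum_i r_is_i$ (resp. $N=(r+s+1)n+m\binom n2$), each used once, such that in each page every non-diagonal cell has entry larger than that of the diagonal cell in its row (if any) and smaller than that of the diagonal cell in its column (if any). $\mathrm{SB}(n,\mathbf{r},\mathbf{s})$ and $\mathrm{SB}^-(n,\mathbf{r},\mathbf{s})$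 denote these sets. *)

theory Defs
  imports Complex_Main
begin

text \<open>Cells of a Selberg book: the shared diagonal cells Diag j (j = 1..n), and the
non-diagonal cells Off i a b of page i (i = 0..m-1), row a, column b.\<close>
datatype cell = Diag nat | Off nat nat nat

definition staircase :: "nat \<Rightarrow> nat \<Rightarrow> nat \<Rightarrow> (nat \<times> nat) set" where
  "staircase n p q = {(a,b). 1 \<le> a \<and> a \<le> p + n \<and> 1 \<le> b \<and> b \<le> n + q \<and> a \<le> b + p}"

definition staircase_minus :: "nat \<Rightarrow> nat \<Rightarrow> nat \<Rightarrow> (nat \<times> nat) set" where
  "staircase_minus n p q = staircase n p q - {(a,b). a \<le> p \<and> n < b}"

definition is_diag :: "nat \<Rightarrow> nat \<Rightarrow> nat \<Rightarrow> nat \<Rightarrow> bool" where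
  "is_diag n p a b \<longleftrightarrow> a = b + p \<and> 1 \<le> b \<and> b \<le> n"

definition book_cells ::
  "(nat \<Rightarrow> (nat \<times> nat) set) \<Rightarrow> nat \<Rightarrow> nat list \<Rightarrow> cell set" where
  "book_cells pg n r =
     Diag ` {1..n} \<union>
     {Off i a b | i a b. i < length r \<and> (a,b) \<in> pg i \<and> \<not> is_diag n (r!i) a b}"

definition book_cond ::
  "(nat \<Rightarrow> (nat \<times> nat) set) \<Rightarrow> nat \<Rightarrow> nat list \<Rightarrow> (cell \<Rightarrow> nat) \<Rightarrow> bool" where
  "book_cond pg n r f \<longleftrightarrow>
     (\<forall>i a b. i < length r \<and> (a,b) \<in> pg i \<and> \<not> is_diag n (r!i) a b \<longrightarrow>
        (r!i < a \<longrightarrow> f (Diag (a - r!i)) < f (Off i a b)) \<and>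
        (b \<le> n \<longrightarrow> f (Off i a b) < f (Diag b)))"

definition book_fillings ::
  "(nat \<Rightarrow> (nat \<times> nat) set) \<Rightarrow> nat \<Rightarrow> nat list \<Rightarrow> nat \<Rightarrow> (cell \<Rightarrow> nat) set" where
  "book_fillings pg n r N =
     {f. bij_betw f (book_cells pg n r) {1..N} \<and>
         (\<forall>x. x \<notin> book_cells pg n r \<longrightarrow> f x = 0) \<and>
         book_cond pg n r f}"

definition SB_N :: "nat \<Rightarrow> nat list \<Rightarrow> nat list \<Rightarrow> nat" where
  "SB_N n r s = (sum_list r + sum_list s + 1) * n + length r * (n choose 2)
                 + (\<Sum>i<length r. r!i * s!i)"

definition SBm_N :: "nat \<Rightarrow> nat list \<Rightarrow> nat list \<Rightarrow> nat" where
  "SBm_N n r s = (sum_list r + sum_list s + 1) * n + length r * (n choose 2)"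

definition SB :: "nat \<Rightarrow> nat list \<Rightarrow> nat list \<Rightarrow> (cell \<Rightarrow> nat) set" where
  "SB n r s = book_fillings (\<lambda>i. staircase n (r!i) (s!i)) n r (SB_N n r s)"

definition SB_minus :: "nat \<Rightarrow> nat list \<Rightarrow> nat list \<Rightarrow> (cell \<Rightarrow> nat) set" where
  "SB_minus n r s = book_fillings (\<lambda>i. staircase_minus n (r!i) (s!i)) n r (SBm_N n r s)"

end

theory Submission
  imports Defs "HOL-Library.FuncSet"
begin


lemma enum_exists:
  fixes S :: "nat set" assumes "finite S"
  obtains e where "bij_betw e {1..card S} S" "strict_mono_on {1..card S} e"
proof -
  define xs where "xs = sorted_list_of_set S"
  have xs: "sorted_wrt (<) xs" "set xs = S" "length xs = card S"
    using assms by (auto simp: xs_def)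
  define e where "e i = xs ! (i - 1)" for i
  have sm: "strict_mono_on {1..card S} e"
  proof (rule strict_mono_onI)
    fix i j assume "i \<in> {1..card S}" "j \<in> {1..card S}" "i < j"
    then show "e i < e j" unfolding e_def using xs sorted_wrt_nth_less[of "(<)" xs "i-1" "j-1"] by auto
  qed
  have "e ` {1..card S} = S"
  proof
    show "e ` {1..card S} \<subseteq> S" using xs by (auto simp: e_def)
    show "S \<subseteq> e ` {1..card S}"
    proof
      fix v assume "v \<in> S"
      then obtain k where "k < length xs" "xs ! k = v" using xs by (metis in_set_conv_nth)
      then show "v \<in> e ` {1..card S}" using xs unfolding e_def
        by (intro image_eqI[of _ _ "k+1"]) auto
    qed
  qed
  then have "bij_betw e {1..card S} S"
    using strict_mono_on_imp_inj_on[OF sm] by (simp add: bij_betw_def)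
  then show ?thesis using that sm by blast
qed

lemma fillings_finite:
  assumes "finite (book_cells pg n r)"
  shows "finite (book_fillings pg n r N)"
proof -
  let ?C = "book_cells pg n r"
  have "book_fillings pg n r N \<subseteq> (\<lambda>\<phi> x. if x \<in> ?C then \<phi> x else 0) ` (?C \<rightarrow>\<^sub>E {1..N})"
  proof
    fix f assume f: "f \<in> book_fillings pg n r N"
    then have "f = (\<lambda>x. if x \<in> ?C then restrict f ?C x else 0)"
      by (auto simp: book_fillings_def fun_eq_iff)
    moreover have "restrict f ?C \<in> ?C \<rightarrow>\<^sub>E {1..N}"
      using f by (auto simp: book_fillings_def bij_betw_def)
    ultimately show "f \<in> (\<lambda>\<phi> x. if x \<in> ?C then \<phi> x else 0) ` (?C \<rightarrow>\<^sub>E {1..N})" by blast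
  qed
  then show ?thesis using finite_PiE[OF assms, of "\<lambda>_. {1..N}"] by (meson finite_imageI finite_subset finite_atLeastAtMost)
qed

lemma cond_transfer:
  assumes "strict_mono_on T e" "h ` book_cells (\<lambda>i. staircase_minus n (r!i) (s!i)) n r \<subseteq> T"
    "\<forall>x\<in>book_cells (\<lambda>i. staircase_minus n (r!i) (s!i)) n r. h' x = e (h x)"
  shows "book_cond (\<lambda>i. staircase_minus n (r!i) (s!i)) n r h' = book_cond (\<lambda>i. staircase_minus n (r!i) (s!i)) n r h"
proof -
  let ?C = "book_cells (\<lambda>i. staircase_minus n (r!i) (s!i)) n r"
  have key: "\<And>x y. x \<in> ?C \<Longrightarrow> y \<in> ?C \<Longrightarrow> (h' x < h' y) = (h x < h y)"
    using assms strict_mono_on_less by (metis image_subset_iff)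
  have off: "Off i a b \<in> ?C" if "i < length r" "(a,b) \<in> staircase_minus n (r!i) (s!i)" "\<not> is_diag n (r!i) a b" for i a b
    using that unfolding book_cells_def by blast
  have d1: "Diag (a - r!i) \<in> ?C" if "(a,b) \<in> staircase_minus n (r!i) (s!i)" "r!i < a" for i a b
  proof -
    have "a - r!i \<in> {1..n}" using that unfolding staircase_minus_def staircase_def by auto
    then show ?thesis unfolding book_cells_def by blast
  qed
  have d2: "Diag b \<in> ?C" if "(a,b) \<in> staircase_minus n (r!i) (s!i)" "b \<le> n" for i a b
    using that unfolding book_cells_def staircase_minus_def staircase_def by auto
  show ?thesis unfolding book_cond_def
    using key off d1 d2 by (smt (verit))
qed



definition Fset :: "nat \<Rightarrow> nat list \<Rightarrow> nat list \<Rightarrow> cell set" where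
  "Fset n r s = (\<lambda>(i,a,b). Off i a b) ` (SIGMA i:{..<length r}. {1..r!i} \<times> {n+1..n+s!i})"

lemma Fset_mem: "x \<in> Fset n r s \<longleftrightarrow> (\<exists>i a b. x = Off i a b \<and> i < length r \<and> 1 \<le> a \<and> a \<le> r!i \<and> n < b \<and> b \<le> n + s!i)"
  unfolding Fset_def by force

lemma card_Fset: "card (Fset n r s) = (\<Sum>i<length r. r!i * s!i)"
proof -
  have "inj_on (\<lambda>(i,a,b). Off i a b) (SIGMA i:{..<length r}. {1..r!i} \<times> {n+1..n+s!i})"
    by (auto simp: inj_on_def)
  then have "card (Fset n r s) = card (SIGMA i:{..<length r}. {1..r!i} \<times> {n+1..n+s!i})"
    unfolding Fset_def by (rule card_image)
  also have "\<dots> = (\<Sum>i<length r. card ({1..r!i} \<times> {n+1..n+s!i}))"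
    by (rule card_SigmaI) auto
  also have "\<dots> = (\<Sum>i<length r. r!i * s!i)"
    by (simp add: card_cartesian_product)
  finally show ?thesis .
qed

lemma mem_cells_Diag: "Diag j \<in> book_cells pg n r \<longleftrightarrow> j \<in> {1..n}"
  unfolding book_cells_def by blast

lemma mem_cells_Off: "Off i a b \<in> book_cells pg n r \<longleftrightarrow> i < length r \<and> (a,b) \<in> pg i \<and> \<not> is_diag n (r!i) a b"
  unfolding book_cells_def by blast

lemma Fset_Diag: "Diag j \<notin> Fset n r s" by (simp add: Fset_mem)
lemma Fset_Off: "Off i a b \<in> Fset n r s \<longleftrightarrow> i < length r \<and> 1 \<le> a \<and> a \<le> r!i \<and> n < b \<and> b \<le> n + s!i"
  by (simp add: Fset_mem)

lemma cells_split:
  "book_cells (\<lambda>i. staircase n (r!i) (s!i)) n r = book_cells (\<lambda>i. staircase_minus n (r!i) (s!i)) n r \<union> Fset n r s"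
  "book_cells (\<lambda>i. staircase_minus n (r!i) (s!i)) n r \<inter> Fset n r s = {}"
proof -
  show "book_cells (\<lambda>i. staircase n (r!i) (s!i)) n r = book_cells (\<lambda>i. staircase_minus n (r!i) (s!i)) n r \<union> Fset n r s"
  proof (rule set_eqI)
    fix x show "x \<in> book_cells (\<lambda>i. staircase n (r!i) (s!i)) n r \<longleftrightarrow> x \<in> book_cells (\<lambda>i. staircase_minus n (r!i) (s!i)) n r \<union> Fset n r s"
      by (cases x) (auto simp: mem_cells_Diag mem_cells_Off Fset_Diag Fset_Off staircase_minus_def staircase_def is_diag_def)
  qed
  show "book_cells (\<lambda>i. staircase_minus n (r!i) (s!i)) n r \<inter> Fset n r s = {}"
  proof (rule equals0I)
    fix x assume "x \<in> book_cells (\<lambda>i. staircase_minus n (r!i) (s!i)) n r \<inter> Fset n r s"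
    then show False
      by (cases x) (auto simp: mem_cells_Diag mem_cells_Off Fset_Diag Fset_Off staircase_minus_def)
  qed
qed

lemma cells_finite: "finite (book_cells (\<lambda>i. staircase n (r!i) (s!i)) n r)"
proof -
  have "book_cells (\<lambda>i. staircase n (r!i) (s!i)) n r \<subseteq> Diag ` {1..n} \<union>
      (\<lambda>(i,a,b). Off i a b) ` (SIGMA i:{..<length r}. {..r!i + n} \<times> {..n + s!i})"
    unfolding book_cells_def staircase_def by force
  moreover have "finite (SIGMA i:{..<length r}. {..r!i + n} \<times> {..n + s!i})" by auto
  ultimately show ?thesis by (meson finite_Un finite_imageI finite_atLeastAtMost finite_subset)
qed

lemma cond_equiv:
  "book_cond (\<lambda>i. staircase n (r!i) (s!i)) n r f = book_cond (\<lambda>i. staircase_minus n (r!i) (s!i)) n r f"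
proof -
  have "\<And>i a b. (i < length r \<and> (a,b) \<in> staircase n (r!i) (s!i) \<and> \<not> is_diag n (r!i) a b \<longrightarrow>
        (r!i < a \<longrightarrow> f (Diag (a - r!i)) < f (Off i a b)) \<and> (b \<le> n \<longrightarrow> f (Off i a b) < f (Diag b)))
     = (i < length r \<and> (a,b) \<in> staircase_minus n (r!i) (s!i) \<and> \<not> is_diag n (r!i) a b \<longrightarrow>
        (r!i < a \<longrightarrow> f (Diag (a - r!i)) < f (Off i a b)) \<and> (b \<le> n \<longrightarrow> f (Off i a b) < f (Diag b)))"
  proof -
    fix i a b
    show "?thesis i a b"
    proof (cases "a \<le> r!i \<and> n < b")
      case True then show ?thesis by auto
    next
      case False
      then have "(a,b) \<in> staircase_minus n (r!i) (s!i) \<longleftrightarrow> (a,b) \<in> staircase n (r!i) (s!i)"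
        unfolding staircase_minus_def by auto
      then show ?thesis by simp
    qed
  qed
  then show ?thesis unfolding book_cond_def by presburger
qed

lemma fact_prod: "k \<le> N \<Longrightarrow> (fact N :: real) = real (\<Prod>j\<in>{0..<k}. N - j) * fact (N - k)"
proof (induction k)
  case 0 then show ?case by simp
next
  case (Suc k)
  have "(fact (N - k) :: real) = real (N - k) * fact (N - Suc k)"
    using Suc.prems by (metis Suc_diff_Suc fact_Suc less_eq_Suc_le of_nat_Suc)
  then show ?case using Suc by (simp add: mult.assoc mult.commute)
qed


theorem proposition4p4:
  fixes n :: nat and r s :: "nat list"
  assumes "0 < n" and "0 < length r" and "length s = length r"
  shows "real (card (SB n r s)) =
         real (card (SB_minus n r s)) *
         fact ((sum_list r + sum_list s + 1) * n + length r * (n choose 2) + (\<Sum>i<length r. r!i * s!i))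
         / fact ((sum_list r + sum_list s + 1) * n + length r * (n choose 2))"
proof -
  define pg where "pg = (\<lambda>i. staircase n (r!i) (s!i))"
  define pgm where "pgm = (\<lambda>i. staircase_minus n (r!i) (s!i))"
  define C where "C = book_cells pg n r"
  define Cm where "Cm = book_cells pgm n r"
  define F where "F = Fset n r s"
  define K where "K = (\<Sum>i<length r. r!i * s!i)"
  define Nm where "Nm = (sum_list r + sum_list s + 1) * n + length r * (n choose 2)"
  define N where "N = Nm + K"
  have CU: "C = Cm \<union> F" and CI: "Cm \<inter> F = {}"
    using cells_split by (simp_all add: C_def Cm_def F_def pg_def pgm_def)
  have finC: "finite C" using cells_finite by (simp add: C_def pg_def)
  have finCm: "finite Cm" and finF: "finite F" using finC CU by auto
  have cardF: "card F = K" by (simp add: F_def K_def card_Fset)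
  have SBdef: "SB n r s = book_fillings pg n r N"
    unfolding SB_def SB_N_def pg_def N_def Nm_def K_def by simp
  have SBmdef: "SB_minus n r s = book_fillings pgm n r Nm"
    unfolding SB_minus_def SBm_N_def pgm_def Nm_def by simp
  have cond: "\<And>f. book_cond pg n r f = book_cond pgm n r f"
    unfolding pg_def pgm_def by (rule cond_equiv)
  have finSB: "finite (SB n r s)" unfolding SBdef using fillings_finite finC C_def by blast
  define G where "G = {g \<in> F \<rightarrow>\<^sub>E {1..N}. inj_on g F}"
  define Fib where "Fib g = {f \<in> SB n r s. \<forall>x\<in>F. f x = g x}" for g
  have finG: "finite G" unfolding G_def using finite_PiE[OF finF, of "\<lambda>_. {1..N}"] by simp
  have cardG: "card G = (\<Prod>j\<in>{0..<K}. N - j)"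
    using card_inj_on_subset_funcset[OF finF, of "{1..N}" F] cardF unfolding G_def by simp
  have fibcard: "card (Fib g) = card (SB_minus n r s)" if gG: "g \<in> G" for g
  proof -
    have gF: "g \<in> F \<rightarrow>\<^sub>E {1..N}" "inj_on g F" using gG by (auto simp: G_def)
    define S where "S = {1..N} - g ` F"
    have gsub: "g ` F \<subseteq> {1..N}" using gF by auto
    have cardS: "card S = Nm"
      unfolding S_def using card_Diff_subset[OF finite_imageI[OF finF] gsub] card_image[OF gF(2)] cardF
      by (simp add: N_def)
    have finS: "finite S" by (simp add: S_def)
    obtain e where e: "bij_betw e {1..Nm} S" "strict_mono_on {1..Nm} e"
      using enum_exists[OF finS] cardS by metis
    define ei where "ei = inv_into {1..Nm} e"
    have ei_bij: "bij_betw ei S {1..Nm}" unfolding ei_def by (rule bij_betw_inv_into[OF e(1)])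
    have e_ei: "\<And>v. v \<in> S \<Longrightarrow> e (ei v) = v" unfolding ei_def using e(1) bij_betw_inv_into_right by metis
    have ei_e: "\<And>i. i \<in> {1..Nm} \<Longrightarrow> ei (e i) = i" unfolding ei_def using e(1) bij_betw_inv_into_left by metis
    have ei_in: "\<And>v. v \<in> S \<Longrightarrow> ei v \<in> {1..Nm}" using ei_bij bij_betwE by blast
    have ei_sm: "strict_mono_on S ei"
    proof (rule strict_mono_onI)
      fix v w assume vw: "v \<in> S" "w \<in> S" "v < w"
      show "ei v < ei w"
      proof (rule ccontr)
        assume "\<not> ei v < ei w"
        then have "ei w \<le> ei v" by simp
        then have "e (ei w) \<le> e (ei v)"
          using strict_mono_on_less[OF e(2) ei_in[OF vw(2)] ei_in[OF vw(1)]]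
          by (metis le_less)
        then show False using vw e_ei by simp
      qed
    qed
    have SgF: "S \<inter> g ` F = {}" "S \<union> g ` F = {1..N}" using gsub by (auto simp: S_def)
    define \<Psi> where "\<Psi> h = (\<lambda>x. if x \<in> F then g x else if x \<in> Cm then e (h x) else 0)" for h
    define \<Phi> where "\<Phi> f = (\<lambda>x. if x \<in> Cm then ei (f x) else 0)" for f
    have memSBm: "bij_betw h Cm {1..Nm} \<and> (\<forall>x. x \<notin> Cm \<longrightarrow> h x = 0) \<and> book_cond pgm n r h"
      if "h \<in> SB_minus n r s" for h
      using that unfolding SBmdef book_fillings_def Cm_def by simp
    have memFib: "bij_betw f C {1..N} \<and> (\<forall>x. x \<notin> C \<longrightarrow> f x = 0) \<and> book_cond pg n r f \<and> (\<forall>x\<in>F. f x = g x)"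
      if "f \<in> Fib g" for f
      using that unfolding Fib_def SBdef book_fillings_def C_def by simp
    have "bij_betw \<Psi> (SB_minus n r s) (Fib g)"
    proof (rule bij_betw_byWitness[where f' = \<Phi>])
      show "\<forall>h\<in>SB_minus n r s. \<Phi> (\<Psi> h) = h"
      proof
        fix h assume "h \<in> SB_minus n r s"
        note H = memSBm[OF this]
        show "\<Phi> (\<Psi> h) = h"
        proof
          fix x show "\<Phi> (\<Psi> h) x = h x"
          proof (cases "x \<in> Cm")
            case True
            then have "x \<notin> F" "h x \<in> {1..Nm}" using CI H bij_betwE by blast+
            then show ?thesis using True ei_e by (simp add: \<Phi>_def \<Psi>_def)
          next
            case False then show ?thesis using H by (simp add: \<Phi>_def)
          qed
        qed
      qed
      show "\<forall>f\<in>Fib g. \<Psi> (\<Phi> f) = f"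
      proof
        fix f assume "f \<in> Fib g"
        note H = memFib[OF this]
        show "\<Psi> (\<Phi> f) = f"
        proof
          fix x show "\<Psi> (\<Phi> f) x = f x"
          proof (cases "x \<in> F")
            case True then show ?thesis using H by (simp add: \<Psi>_def)
          next
            case xF: False
            show ?thesis
            proof (cases "x \<in> Cm")
              case True
              have xC: "x \<in> C" using True CU by blast
              have "f x \<in> {1..N}" using H xC bij_betwE by blast
              moreover have "f x \<notin> g ` F"
              proof
                assume "f x \<in> g ` F"
                then obtain y where y: "y \<in> F" "f x = g y" by blast
                then have "f x = f y" using H by simp
                moreover have "y \<in> C" using y CU by blast
                ultimately have "x = y" using H xC unfolding bij_betw_def inj_on_def by blast
                then show False using xF y by simp
              qed
              ultimately have "f x \<in> S" by (simp add: S_def)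
              then show ?thesis using True xF e_ei by (simp add: \<Psi>_def \<Phi>_def)
            next
              case False
              then have "x \<notin> C" using xF CU by blast
              then show ?thesis using H xF False by (simp add: \<Psi>_def)
            qed
          qed
        qed
      qed
      show "\<Psi> ` SB_minus n r s \<subseteq> Fib g"
      proof
        fix f assume "f \<in> \<Psi> ` SB_minus n r s"
        then obtain h where h: "h \<in> SB_minus n r s" and f: "f = \<Psi> h" by blast
        note H = memSBm[OF h]
        have b1: "bij_betw f F (g ` F)"
          using bij_betw_cong[of F f g "g ` F"] inj_on_imp_bij_betw[OF gF(2)] by (simp add: f \<Psi>_def)
        have "bij_betw (e \<circ> h) Cm S" using bij_betw_trans H e(1) by blast
        moreover have "bij_betw f Cm S = bij_betw (e \<circ> h) Cm S"
          by (rule bij_betw_cong) (use CI in \<open>auto simp: f \<Psi>_def\<close>)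
        ultimately have b2: "bij_betw f Cm S" by simp
        have bC: "bij_betw f C {1..N}"
          using bij_betw_combine[OF b2 b1 SgF(1)] CU SgF(2) by simp
        have z: "\<forall>x. x \<notin> C \<longrightarrow> f x = 0" using CU by (simp add: f \<Psi>_def)
        have hsub: "h ` Cm \<subseteq> {1..Nm}" using H bij_betw_imp_surj_on by blast
        have "book_cond pgm n r f = book_cond pgm n r h"
          unfolding pgm_def
          apply (rule cond_transfer[OF e(2)])
          using hsub CI by (auto simp: f \<Psi>_def Cm_def pgm_def)
        then have c: "book_cond pg n r f" using H cond by simp
        have "\<forall>x\<in>F. f x = g x" by (simp add: f \<Psi>_def)
        then show "f \<in> Fib g" using bC z c unfolding Fib_def SBdef book_fillings_def C_def by simp
      qed
      show "\<Phi> ` Fib g \<subseteq> SB_minus n r s"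
      proof
        fix h assume "h \<in> \<Phi> ` Fib g"
        then obtain f where f: "f \<in> Fib g" and h: "h = \<Phi> f" by blast
        note H = memFib[OF f]
        have fF: "f ` F = g ` F" using H by (simp add: image_def)
        have CmD: "Cm = C - F" using CU CI by blast
        have "f ` Cm = f ` C - f ` F"
          unfolding CmD using H by (intro inj_on_image_set_diff) (auto simp: bij_betw_def CU)
        also have "\<dots> = S" using H fF by (simp add: S_def bij_betw_def)
        finally have fCm: "f ` Cm = S" .
        have "bij_betw f Cm S" using bij_betw_subset H fCm CU by blast
        then have "bij_betw (ei \<circ> f) Cm {1..Nm}" using bij_betw_trans ei_bij by blast
        moreover have "bij_betw h Cm {1..Nm} = bij_betw (ei \<circ> f) Cm {1..Nm}"
          by (rule bij_betw_cong) (simp add: h \<Phi>_def)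
        ultimately have bC: "bij_betw h Cm {1..Nm}" by simp
        have z: "\<forall>x. x \<notin> Cm \<longrightarrow> h x = 0" by (simp add: h \<Phi>_def)
        have "book_cond pgm n r h = book_cond pgm n r f"
          unfolding pgm_def
          apply (rule cond_transfer[OF ei_sm])
          using fCm by (auto simp: h \<Phi>_def Cm_def pgm_def)
        then have c: "book_cond pgm n r h" using H cond by simp
        then show "h \<in> SB_minus n r s" using bC z unfolding SBmdef book_fillings_def Cm_def by simp
      qed
    qed
    then show ?thesis by (simp add: bij_betw_same_card)
  qed
  have SBU: "SB n r s = (\<Union>g\<in>G. Fib g)"
  proof
    show "(\<Union>g\<in>G. Fib g) \<subseteq> SB n r s" by (auto simp: Fib_def)
    show "SB n r s \<subseteq> (\<Union>g\<in>G. Fib g)"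
    proof
      fix f assume f: "f \<in> SB n r s"
      then have bC: "bij_betw f C {1..N}" unfolding SBdef book_fillings_def C_def by simp
      have "restrict f F \<in> G"
        using bC CU unfolding G_def bij_betw_def inj_on_def by auto
      moreover have "f \<in> Fib (restrict f F)" using f by (simp add: Fib_def)
      ultimately show "f \<in> (\<Union>g\<in>G. Fib g)" by blast
    qed
  qed
  have disj: "\<forall>g1\<in>G. \<forall>g2\<in>G. g1 \<noteq> g2 \<longrightarrow> Fib g1 \<inter> Fib g2 = {}"
  proof (intro ballI impI)
    fix g1 g2 assume g: "g1 \<in> G" "g2 \<in> G" "g1 \<noteq> g2"
    then obtain x where "x \<in> F" "g1 x \<noteq> g2 x"
      unfolding G_def by (metis (mono_tags, lifting) PiE_ext mem_Collect_eq)
    then show "Fib g1 \<inter> Fib g2 = {}" by (auto simp: Fib_def)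
  qed
  have finFib: "\<forall>g\<in>G. finite (Fib g)" using finSB by (auto simp: Fib_def)
  have "card (SB n r s) = (\<Sum>g\<in>G. card (Fib g))"
    unfolding SBU by (rule card_UN_disjoint[OF finG finFib disj])
  also have "\<dots> = card G * card (SB_minus n r s)" using fibcard by simp
  finally have main: "card (SB n r s) = (\<Prod>j\<in>{0..<K}. N - j) * card (SB_minus n r s)"
    using cardG by simp
  have fN: "(fact N :: real) = real (\<Prod>j\<in>{0..<K}. N - j) * fact Nm"
    using fact_prod[of K N] by (simp add: N_def)
  have "real (card (SB n r s)) = real (card (SB_minus n r s)) * fact N / fact Nm"
    using main fN by simp
  then show ?thesis by (simp add: N_def Nm_def K_def)
qed

end
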